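(* Let $\mathcal{C}=\mathsf{CSS}(A,B)$ be a CSS code on $n$ qubits and let $U=\bigotimes_{i=1}^n U_i$ be a $1$-local Clifford circuit with each $U_i\in\{I,P,HP,PH,PHP,H\}$. If $U$ is a logical operator of $\mathcal{C}$, then for each $h\in\{U_{HP},U_{PH},U_H\}$ that is non-empty and a proper subset of $\{1,\dots,n\}$, the code $\mathcal{C}$ splits on $h$.
   Context: A CSS code $\mathsf{CSS}(A,B)$ on $n$ qubits is given by subspaces $A,B\subseteq\mathbb{F}_2^n$ with $a\cdot b=0$ for all $a\in A,b\in B$; its codespace is the common $+1$-eigenspace of $X^a$ ($a\in A$) and $Z^b$ ($b\in B$), where $G^a=\bigotimes_{i:a_i=1}G_i$. A logical operator is a unitary preserving the codespace. $P=\mathrm{diag}(1,i)$, $H$ is Hadamard. For a set $K$ of single-qubit gates, $U_K=\{i: U_i\in K\}$, and $U_G=U_{\{G\}}$. A subspace $A$ splits on a non-empty $h\subsetneq\{1,\dots,n\}$ if $A=A_1\oplus A_2$ with $A_1$ having support $h$ and $A_2$ supported on the complement of $h$; the code splits on $h$ if both $A$ and $B$ split on $h$. *)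

theory Defs
  imports Complex_Main
begin

text \<open>Qubits are indexed by 0..n-1. Vectors of F_2^n and computational basis
  strings are both represented as functions nat => bool vanishing from index n on.\<close>

definition bvecs :: "nat \<Rightarrow> (nat \<Rightarrow> bool) set" where
  "bvecs n = {x. \<forall>i\<ge>n. \<not> x i}"

definition bxor :: "(nat \<Rightarrow> bool) \<Rightarrow> (nat \<Rightarrow> bool) \<Rightarrow> (nat \<Rightarrow> bool)" where
  "bxor a b = (\<lambda>i. a i \<noteq> b i)"

definition bsupp :: "nat \<Rightarrow> (nat \<Rightarrow> bool) \<Rightarrow> nat set" where
  "bsupp n a = {i. i < n \<and> a i}"

definition bdot :: "nat \<Rightarrow> (nat \<Rightarrow> bool) \<Rightarrow> (nat \<Rightarrow> bool) \<Rightarrow> bool" where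
  "bdot n a b = odd (card {i. i < n \<and> a i \<and> b i})"

definition f2_subspace :: "nat \<Rightarrow> (nat \<Rightarrow> bool) set \<Rightarrow> bool" where
  "f2_subspace n A \<longleftrightarrow> A \<subseteq> bvecs n \<and> (\<lambda>_. False) \<in> A \<and>
     (\<forall>a\<in>A. \<forall>b\<in>A. bxor a b \<in> A)"

type_synonym state = "(nat \<Rightarrow> bool) \<Rightarrow> complex"

definition states :: "nat \<Rightarrow> state set" where
  "states n = {f. \<forall>x. x \<notin> bvecs n \<longrightarrow> f x = 0}"

definition Xop :: "(nat \<Rightarrow> bool) \<Rightarrow> state \<Rightarrow> state" where
  "Xop a f = (\<lambda>y. f (bxor y a))"

definition Zop :: "nat \<Rightarrow> (nat \<Rightarrow> bool) \<Rightarrow> state \<Rightarrow> state" where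
  "Zop n b f = (\<lambda>y. (-1) ^ card {i. i < n \<and> b i \<and> y i} * f y)"

definition codespace :: "nat \<Rightarrow> (nat \<Rightarrow> bool) set \<Rightarrow> (nat \<Rightarrow> bool) set \<Rightarrow> state set" where
  "codespace n A B = {f \<in> states n. (\<forall>a\<in>A. Xop a f = f) \<and> (\<forall>b\<in>B. Zop n b f = f)}"

text \<open>Single-qubit gates as 2x2 matrices, g out in, with False = |0>, True = |1>.\<close>
type_synonym gate = "bool \<Rightarrow> bool \<Rightarrow> complex"

definition gmult :: "gate \<Rightarrow> gate \<Rightarrow> gate" where
  "gmult g k = (\<lambda>x y. \<Sum>z\<in>UNIV. g x z * k z y)"

definition gI :: gate where "gI = (\<lambda>x y. if x = y then 1 else 0)"
definition gP :: gate where "gP = (\<lambda>x y. if x = y then (if x then \<i> else 1) else 0)"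
definition gH :: gate where
  "gH = (\<lambda>x y. (if x \<and> y then -1 else 1) / complex_of_real (sqrt 2))"
definition gHP :: gate where "gHP = gmult gH gP"
definition gPH :: gate where "gPH = gmult gP gH"
definition gPHP :: gate where "gPHP = gmult gP (gmult gH gP)"

definition local_op :: "nat \<Rightarrow> (nat \<Rightarrow> gate) \<Rightarrow> state \<Rightarrow> state" where
  "local_op n U f = (\<lambda>y. if y \<in> bvecs n
      then (\<Sum>x\<in>bvecs n. (\<Prod>i<n. U i (y i) (x i)) * f x) else 0)"

definition logical_op :: "nat \<Rightarrow> (nat \<Rightarrow> bool) set \<Rightarrow> (nat \<Rightarrow> bool) set \<Rightarrow> (state \<Rightarrow> state) \<Rightarrow> bool" where
  "logical_op n A B V \<longleftrightarrow> V ` codespace n A B = codespace n A B"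

definition gate_set :: "nat \<Rightarrow> (nat \<Rightarrow> gate) \<Rightarrow> gate set \<Rightarrow> nat set" where
  "gate_set n U K = {i. i < n \<and> U i \<in> K}"

definition subspace_splits :: "nat \<Rightarrow> (nat \<Rightarrow> bool) set \<Rightarrow> nat set \<Rightarrow> bool" where
  "subspace_splits n A h \<longleftrightarrow> (\<exists>A1 A2. f2_subspace n A1 \<and> f2_subspace n A2 \<and>
      (\<forall>a\<in>A1. bsupp n a \<subseteq> h) \<and> (\<forall>a\<in>A2. bsupp n a \<subseteq> {0..<n} - h) \<and>
      A1 \<inter> A2 = {\<lambda>_. False} \<and>
      A = {bxor a1 a2 | a1 a2. a1 \<in> A1 \<and> a2 \<in> A2})"

definition code_splits :: "nat \<Rightarrow> (nat \<Rightarrow> bool) set \<Rightarrow> (nat \<Rightarrow> bool) set \<Rightarrow> nat set \<Rightarrow> bool" where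
  "code_splits n A B h \<longleftrightarrow> subspace_splits n A h \<and> subspace_splits n B h"

end

theory Submission
  imports Defs
begin


lemma gH_eq: "gH y x = (if y \<and> x then -1 else 1) / complex_of_real (sqrt 2)"
  by (simp add: gH_def)
lemma gHP_eq: "gHP y x = (if y \<and> x then -1 else 1) * (if x then \<i> else 1) / complex_of_real (sqrt 2)"
  by (cases x; cases y; simp add: gHP_def gmult_def gH_def gP_def UNIV_bool)
lemma gPH_eq: "gPH y x = (if y then \<i> else 1) * (if y \<and> x then -1 else 1) / complex_of_real (sqrt 2)"
  by (cases x; cases y; simp add: gPH_def gmult_def gH_def gP_def UNIV_bool)
lemma gPHP_eq: "gPHP y x = (if y then \<i> else 1) * (if y \<and> x then -1 else 1) * (if x then \<i> else 1) / complex_of_real (sqrt 2)"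
  by (cases x; cases y; simp add: gPHP_def gmult_def gH_def gP_def UNIV_bool)

lemmas gate_eqs = gH_eq gHP_eq gPH_eq gPHP_eq gI_def gP_def

lemma sq2: "complex_of_real (sqrt 2) \<noteq> 0" by simp

lemma neq_entry: "G1 y x \<noteq> G2 y x \<Longrightarrow> G1 \<noteq> G2" by auto

lemma gd0: "gI \<noteq> gP" by (rule neq_entry[of _ True True]) (simp add: gate_eqs complex_eq_iff)
lemma gd1: "gI \<noteq> gH" by (rule neq_entry[of _ False True]) (simp add: gate_eqs complex_eq_iff)
lemma gd2: "gI \<noteq> gHP" by (rule neq_entry[of _ False True]) (simp add: gate_eqs complex_eq_iff)
lemma gd3: "gI \<noteq> gPH" by (rule neq_entry[of _ False True]) (simp add: gate_eqs complex_eq_iff)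
lemma gd4: "gI \<noteq> gPHP" by (rule neq_entry[of _ False True]) (simp add: gate_eqs complex_eq_iff)
lemma gd5: "gP \<noteq> gH" by (rule neq_entry[of _ False True]) (simp add: gate_eqs complex_eq_iff)
lemma gd6: "gP \<noteq> gHP" by (rule neq_entry[of _ False True]) (simp add: gate_eqs complex_eq_iff)
lemma gd7: "gP \<noteq> gPH" by (rule neq_entry[of _ False True]) (simp add: gate_eqs complex_eq_iff)
lemma gd8: "gP \<noteq> gPHP" by (rule neq_entry[of _ False True]) (simp add: gate_eqs complex_eq_iff)
lemma gd9: "gH \<noteq> gHP" by (rule neq_entry[of _ False True]) (simp add: gate_eqs complex_eq_iff)
lemma gd10: "gH \<noteq> gPH" by (rule neq_entry[of _ True False]) (simp add: gate_eqs complex_eq_iff)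
lemma gd11: "gH \<noteq> gPHP" by (rule neq_entry[of _ False True]) (simp add: gate_eqs complex_eq_iff)
lemma gd12: "gHP \<noteq> gPH" by (rule neq_entry[of _ False True]) (simp add: gate_eqs complex_eq_iff)
lemma gd13: "gHP \<noteq> gPHP" by (rule neq_entry[of _ True False]) (simp add: gate_eqs complex_eq_iff)
lemma gd14: "gPH \<noteq> gPHP" by (rule neq_entry[of _ False True]) (simp add: gate_eqs complex_eq_iff)
lemmas gates_distinct = gd0 gd1 gd2 gd3 gd4 gd5 gd6 gd7 gd8 gd9 gd10 gd11 gd12 gd13 gd14 gd0[symmetric] gd1[symmetric] gd2[symmetric] gd3[symmetric] gd4[symmetric] gd5[symmetric] gd6[symmetric] gd7[symmetric] gd8[symmetric] gd9[symmetric] gd10[symmetric] gd11[symmetric] gd12[symmetric] gd13[symmetric] gd14[symmetric]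

lemma gateX:
  assumes "G \<in> {gI,gP,gHP,gPH,gPHP,gH}"
  shows "\<exists>\<phi>. \<forall>y x. G y (x \<noteq> a) = \<phi> * (if (a \<and> G \<in> {gP,gH,gHP,gPH}) \<and> y then -1 else 1)
            * G (y \<noteq> (a \<and> G \<in> {gI,gP,gPHP,gHP})) x"
proof (cases a)
  case False then show ?thesis by (intro exI[of _ 1]) simp
next
  case True
  show ?thesis using assms True
    apply (elim insertE emptyE)
    subgoal by (intro exI[of _ 1]; simp add: gates_distinct; simp add: all_bool_eq gate_eqs)
    subgoal by (intro exI[of _ "-\<i>"]; simp add: gates_distinct; simp add: all_bool_eq gate_eqs)
    subgoal by (intro exI[of _ "\<i>"]; simp add: gates_distinct; simp add: all_bool_eq gate_eqs)
    subgoal by (intro exI[of _ 1]; simp add: gates_distinct; simp add: all_bool_eq gate_eqs)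
    subgoal by (intro exI[of _ 1]; simp add: gates_distinct; simp add: all_bool_eq gate_eqs)
    subgoal by (intro exI[of _ 1]; simp add: gates_distinct; simp add: all_bool_eq gate_eqs)
    done
qed

lemma gateZ:
  assumes "G \<in> {gI,gP,gHP,gPH,gPHP,gH}"
  shows "\<exists>\<phi>. \<forall>y x. G y x * (if b \<and> x then -1 else 1) = \<phi> * (if (b \<and> G \<in> {gI,gP,gPHP,gPH}) \<and> y then -1 else 1)
            * G (y \<noteq> (b \<and> G \<in> {gPHP,gH,gHP,gPH})) x"
proof (cases b)
  case False then show ?thesis by (intro exI[of _ 1]) simp
next
  case True
  show ?thesis using assms True
    apply (elim insertE emptyE)
    subgoal by (intro exI[of _ 1]; simp add: gates_distinct; simp add: all_bool_eq gate_eqs)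
    subgoal by (intro exI[of _ 1]; simp add: gates_distinct; simp add: all_bool_eq gate_eqs)
    subgoal by (intro exI[of _ 1]; simp add: gates_distinct; simp add: all_bool_eq gate_eqs)
    subgoal by (intro exI[of _ "-\<i>"]; simp add: gates_distinct; simp add: all_bool_eq gate_eqs)
    subgoal by (intro exI[of _ "-\<i>"]; simp add: gates_distinct; simp add: all_bool_eq gate_eqs)
    subgoal by (intro exI[of _ 1]; simp add: gates_distinct; simp add: all_bool_eq gate_eqs)
    done
qed


lemma card_Suc_split: "card {i. i < Suc n \<and> P i} = card {i. i < n \<and> P i} + (if P n then 1 else 0)"
proof (cases "P n")
  case True
  have "{i. i < Suc n \<and> P i} = insert n {i. i < n \<and> P i}" using True by auto
  then show ?thesis using True by simp
next
  case False
  have "{i. i < Suc n \<and> P i} = {i. i < n \<and> P i}" using False less_Suc_eq by auto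
  then show ?thesis using False by simp
qed

lemma bdot_0[simp]: "bdot 0 a b = False" by (simp add: bdot_def)
lemma bdot_Suc: "bdot (Suc n) a b = (bdot n a b \<noteq> (a n \<and> b n))"
  unfolding bdot_def by (subst card_Suc_split) auto

lemma bdot_comm: "bdot n a b = bdot n b a"
  by (induction n) (auto simp: bdot_Suc)

lemma bdot_xor_left: "bdot n (bxor a b) c = (bdot n a c \<noteq> bdot n b c)"
  by (induction n) (auto simp: bdot_Suc bxor_def)
lemma bdot_xor_right: "bdot n c (bxor a b) = (bdot n c a \<noteq> bdot n c b)"
  using bdot_xor_left bdot_comm by metis

lemma bdot_cong: "(\<And>i. i < n \<Longrightarrow> a i = a' i) \<Longrightarrow> (\<And>i. i < n \<Longrightarrow> b i = b' i) \<Longrightarrow> bdot n a b = bdot n a' b'"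
  by (induction n) (auto simp: bdot_Suc)

lemma bdot_none: "(\<And>i. i < n \<Longrightarrow> \<not> (a i \<and> b i)) \<Longrightarrow> \<not> bdot n a b"
  by (induction n) (auto simp: bdot_Suc)

lemma bdot_zero[simp]: "bdot n (\<lambda>_. False) b = False"
  by (induction n) (auto simp: bdot_Suc)

lemma minus_one_card: "(-1::complex) ^ card {i. i < (n::nat) \<and> P i} = (if odd (card {i. i < n \<and> P i}) then -1 else 1)"
  by (simp add: minus_one_power_iff)

lemma prod_sign: "(\<Prod>i<(n::nat). (if P i then -1 else 1::complex)) = (-1) ^ card {i. i < n \<and> P i}"
  by (induction n) (auto simp: card_Suc_split)

lemma bxor_self[simp]: "bxor (bxor y a) a = y" unfolding bxor_def by auto
lemma bxor_zero[simp]: "bxor y (\<lambda>_. False) = y" by (simp add: bxor_def)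
lemma bxor_bvecs: "y \<in> bvecs n \<Longrightarrow> a \<in> bvecs n \<Longrightarrow> bxor y a \<in> bvecs n"
  by (simp add: bxor_def bvecs_def)

lemma bvecs_Suc_sub: "bvecs n \<subseteq> bvecs (Suc n)" by (auto simp: bvecs_def)


lemma bvecs_SucD: "x \<in> bvecs (Suc n) \<Longrightarrow> \<not> x n \<Longrightarrow> x \<in> bvecs n"
  unfolding bvecs_def
proof (intro CollectI allI impI)
  fix i assume a: "x \<in> {x. \<forall>i\<ge>Suc n. \<not> x i}" "\<not> x n" "n \<le> i"
  show "\<not> x i"
  proof (cases "i = n")
    case False then have "Suc n \<le> i" using a(3) by simp
    then show ?thesis using a(1) by simp
  qed (use a in simp)
qed

lemma double_perp:
  assumes "f2_subspace n B" "d \<in> bvecs n" "d \<notin> B"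
  shows "\<exists>y\<in>bvecs n. (\<forall>b\<in>B. \<not> bdot n b y) \<and> bdot n d y"
  using assms
proof (induction n arbitrary: B d)
  case 0
  have "d = (\<lambda>_. False)" using 0(2) by (auto simp: bvecs_def)
  then show ?case using 0(1,3) unfolding f2_subspace_def by blast
next
  case (Suc n)
  have subB: "B \<subseteq> bvecs (Suc n)" and z: "(\<lambda>_. False) \<in> B"
    and cl: "\<And>a b. a \<in> B \<Longrightarrow> b \<in> B \<Longrightarrow> bxor a b \<in> B"
    using Suc.prems(1) unfolding f2_subspace_def by auto
  show ?case
  proof (cases "\<exists>b0\<in>B. b0 n")
    case False
    have "B \<subseteq> bvecs n"
    proof
      fix x assume "x \<in> B"
      then have "x \<in> bvecs (Suc n)" "\<not> x n" using subB False by auto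
      then show "x \<in> bvecs n" by (rule bvecs_SucD)
    qed
    then have Bn: "f2_subspace n B" using z cl by (auto simp: f2_subspace_def)
    show ?thesis
    proof (cases "d n")
      case True
      define y where "y = (\<lambda>i. i = n)"
      have yb: "y \<in> bvecs (Suc n)" by (auto simp: y_def bvecs_def)
      have "bdot (Suc n) b y = False" if "b \<in> B" for b
        using that False bdot_none[of n b y] by (auto simp: bdot_Suc y_def)
      moreover have "bdot (Suc n) d y"
        using True bdot_none[of n d y] by (simp add: bdot_Suc y_def)
      ultimately show ?thesis using yb by auto
    next
      case dF: False
      have "d \<in> bvecs n" using Suc.prems(2) dF by (rule bvecs_SucD)
      from Suc.IH[OF Bn this Suc.prems(3)] obtain y where
        y: "y \<in> bvecs n" "\<forall>b\<in>B. \<not> bdot n b y" "bdot n d y" by blast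
      have yn: "\<not> y n" using y(1) by (simp add: bvecs_def)
      show ?thesis using y yn bvecs_Suc_sub by (auto simp: bdot_Suc)
    qed
  next
    case True
    then obtain b0 where b0: "b0 \<in> B" "b0 n" by blast
    define pr where "pr v = (if v n then bxor v b0 else v)" for v
    define B' where "B' = {b\<in>B. \<not> b n}"
    have prB: "pr v \<in> B" if "v \<in> B" for v using that cl b0 by (auto simp: pr_def)
    have prn: "\<not> pr v n" for v using b0 by (auto simp: pr_def bxor_def)
    have B'sub: "f2_subspace n B'"
      unfolding f2_subspace_def
    proof (intro conjI ballI subsetI)
      fix x assume "x \<in> B'"
      then have "x \<in> bvecs (Suc n)" "\<not> x n" using subB by (auto simp: B'_def)
      then show "x \<in> bvecs n" by (rule bvecs_SucD)
    next
      show "(\<lambda>_. False) \<in> B'" using z by (simp add: B'_def)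
    next
      fix a b assume "a \<in> B'" "b \<in> B'"
      then show "bxor a b \<in> B'" using cl by (simp add: B'_def bxor_def)
    qed
    have d'b: "pr d \<in> bvecs n"
    proof -
      have "pr d \<in> bvecs (Suc n)"
        using Suc.prems(2) b0 subB by (auto simp: pr_def intro: bxor_bvecs)
      then show ?thesis using prn[of d] by (rule bvecs_SucD)
    qed
    have d'nB: "pr d \<notin> B'"
    proof
      assume "pr d \<in> B'"
      then have "pr d \<in> B" by (simp add: B'_def)
      then have "d \<in> B"
      proof (cases "d n")
        case True
        then have "bxor d b0 \<in> B" using \<open>pr d \<in> B\<close> by (simp add: pr_def)
        then have "bxor (bxor d b0) b0 \<in> B" using cl b0 by blast
        then show ?thesis by simp
      qed (simp add: pr_def)
      then show False using Suc.prems(3) by simp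
    qed
    from Suc.IH[OF B'sub d'b d'nB] obtain y' where
      y': "y' \<in> bvecs n" "\<forall>b\<in>B'. \<not> bdot n b y'" "bdot n (pr d) y'" by blast
    define y where "y = y'(n := bdot n b0 y')"
    have yb: "y \<in> bvecs (Suc n)" using y'(1) by (auto simp: y_def bvecs_def)
    have dy: "bdot n v y = bdot n v y'" for v by (rule bdot_cong) (auto simp: y_def)
    have key: "bdot (Suc n) v y = bdot n (pr v) y'" for v
      by (simp add: bdot_Suc dy pr_def bdot_xor_left) (simp add: y_def)
    have "\<not> bdot (Suc n) b y" if "b \<in> B" for b
      using key[of b] y'(2) prB[OF that] prn[of b] by (auto simp: B'_def)
    moreover have "bdot (Suc n) d y" using key[of d] y'(3) by simp
    ultimately show ?thesis using yb by auto
  qed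
qed




lemma sum_bxor:
  assumes "a \<in> bvecs n"
  shows "(\<Sum>x\<in>bvecs n. F x) = (\<Sum>x\<in>bvecs n. F (bxor x a))"
  by (rule sum.reindex_bij_witness[where i="\<lambda>x. bxor x a" and j="\<lambda>x. bxor x a"])
     (auto intro: bxor_bvecs assms)

lemma local_op_conj:
  assumes a: "a \<in> bvecs n"
    and g: "\<forall>i<n. \<forall>y x. U i y (x \<noteq> a i) * s i (x \<noteq> a i) = \<phi> i * (if d i \<and> y then -1 else 1) * U i (y \<noteq> c i) x"
  shows "local_op n U (\<lambda>x. (\<Prod>i<n. s i (x i)) * f (bxor x a)) =
    (\<lambda>y. if y \<in> bvecs n then (\<Prod>i<n. \<phi> i) * (-1) ^ card {i. i < n \<and> d i \<and> y i}
       * local_op n U f (bxor y (\<lambda>i. i < n \<and> c i)) else 0)"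
proof
  fix y
  show "local_op n U (\<lambda>x. (\<Prod>i<n. s i (x i)) * f (bxor x a)) y =
    (if y \<in> bvecs n then (\<Prod>i<n. \<phi> i) * (-1) ^ card {i. i < n \<and> d i \<and> y i}
       * local_op n U f (bxor y (\<lambda>i. i < n \<and> c i)) else 0)"
  proof (cases "y \<in> bvecs n")
    case False then show ?thesis by (simp add: local_op_def)
  next
    case True
    have yc: "bxor y (\<lambda>i. i < n \<and> c i) \<in> bvecs n"
      using True by (auto simp: bvecs_def bxor_def)
    have "local_op n U (\<lambda>x. (\<Prod>i<n. s i (x i)) * f (bxor x a)) y =
        (\<Sum>x\<in>bvecs n. (\<Prod>i<n. U i (y i) (x i)) * ((\<Prod>i<n. s i (x i)) * f (bxor x a)))"
      using True by (simp add: local_op_def)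
    also have "\<dots> = (\<Sum>x\<in>bvecs n. (\<Prod>i<n. U i (y i) (bxor x a i)) * ((\<Prod>i<n. s i (bxor x a i)) * f x))"
      by (subst sum_bxor[OF a]) simp
    also have "\<dots> = (\<Sum>x\<in>bvecs n. (\<Prod>i<n. U i (y i) (x i \<noteq> a i) * s i (x i \<noteq> a i)) * f x)"
      by (simp add: prod.distrib bxor_def mult.assoc)
    also have "\<dots> = (\<Sum>x\<in>bvecs n. ((\<Prod>i<n. \<phi> i) * (\<Prod>i<n. (if d i \<and> y i then -1 else 1))
          * (\<Prod>i<n. U i (bxor y (\<lambda>i. i < n \<and> c i) i) (x i))) * f x)"
      using g by (simp add: prod.distrib[symmetric] bxor_def)
    also have "\<dots> = (\<Prod>i<n. \<phi> i) * (-1) ^ card {i. i < n \<and> d i \<and> y i}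
       * local_op n U f (bxor y (\<lambda>i. i < n \<and> c i))"
      using yc by (simp add: local_op_def sum_distrib_left prod_sign mult.assoc conj_assoc)
    finally show ?thesis using True by simp
  qed
qed



lemma bdot_zero_r[simp]: "bdot n b (\<lambda>_. False) = False"
  using bdot_comm bdot_zero by metis

lemma pauli_fix:
  assumes A: "f2_subspace n A" and B: "f2_subspace n B"
    and orth: "\<forall>a\<in>A. \<forall>b\<in>B. \<not> bdot n a b"
    and c: "c \<in> bvecs n" and d: "d \<in> bvecs n"
    and fx: "\<forall>f\<in>codespace n A B. (\<lambda>y. if y \<in> bvecs n then \<kappa> * (-1) ^ card {i. i < n \<and> d i \<and> y i}
              * f (bxor y c) else 0) = f"
  shows "c \<in> A \<and> d \<in> B"
proof -
  have Asub: "A \<subseteq> bvecs n" and Az: "(\<lambda>_. False) \<in> A"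
    and Acl: "\<And>a b. a \<in> A \<Longrightarrow> b \<in> A \<Longrightarrow> bxor a b \<in> A"
    using A unfolding f2_subspace_def by auto
  have Bsub: "B \<subseteq> bvecs n" and Bz: "(\<lambda>_. False) \<in> B"
    and Bcl: "\<And>a b. a \<in> B \<Longrightarrow> b \<in> B \<Longrightarrow> bxor a b \<in> B"
    using B unfolding f2_subspace_def by auto
  have sgn: "(-1::complex) ^ card {i. i < n \<and> P i} = (if bdot n u v then -1 else 1)"
    if "\<And>i. P i = (u i \<and> v i)" for P u v
    using that by (simp add: minus_one_power_iff bdot_def)
  have z0: "(\<lambda>_. False) \<in> bvecs n" by (simp add: bvecs_def)
  define fA where "fA = (\<lambda>y. if y \<in> A then 1 else (0::complex))"
  have fA: "fA \<in> codespace n A B"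
    unfolding codespace_def
  proof (intro CollectI conjI ballI)
    show "fA \<in> states n" using Asub by (auto simp: states_def fA_def)
  next
    fix a assume a: "a \<in> A"
    show "Xop a fA = fA"
    proof
      fix y
      have "bxor y a \<in> A \<longleftrightarrow> y \<in> A"
        using Acl[OF _ a, of y] Acl[OF _ a, of "bxor y a"] by auto
      then show "Xop a fA y = fA y" by (simp add: Xop_def fA_def)
    qed
  next
    fix b assume b: "b \<in> B"
    show "Zop n b fA = fA"
    proof
      fix y
      show "Zop n b fA y = fA y"
        using orth b sgn[of "\<lambda>i. b i \<and> y i" b y] bdot_comm[of n b y]
        by (auto simp: Zop_def fA_def)
    qed
  qed
  have ev: "(if y \<in> bvecs n then \<kappa> * (-1) ^ card {i. i < n \<and> d i \<and> y i}
              * f (bxor y c) else 0) = f y" if "f \<in> codespace n A B" for f y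
    using fun_cong[OF bspec[OF fx that], of y] by simp
  have bz: "bxor (\<lambda>_. False) v = v" for v by (simp add: bxor_def)
  have c0: "card {i. i < n \<and> d i \<and> False} = 0" by simp
  have "\<kappa> * fA c = 1"
    using ev[OF fA, of "\<lambda>_. False"] z0 Az by (simp add: bz fA_def)
  then have cA: "c \<in> A" by (auto simp: fA_def split: if_splits)
  define fB where "fB = (\<lambda>y. if y \<in> bvecs n \<and> (\<forall>b\<in>B. \<not> bdot n b y) then 1 else (0::complex))"
  have fBx: "fB (bxor y a) = fB y" if a: "a \<in> A" for a y
  proof -
    have ab: "a \<in> bvecs n" using a Asub by auto
    have "bxor y a \<in> bvecs n \<longleftrightarrow> y \<in> bvecs n"
      using bxor_bvecs[OF _ ab, of y] bxor_bvecs[OF _ ab, of "bxor y a"] by auto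
    moreover have "\<And>b. b \<in> B \<Longrightarrow> bdot n b (bxor y a) = bdot n b y"
      using orth a by (simp add: bdot_xor_right bdot_comm[of n _ a])
    ultimately show ?thesis unfolding fB_def by auto
  qed
  have fB: "fB \<in> codespace n A B"
    unfolding codespace_def
  proof (intro CollectI conjI ballI)
    show "fB \<in> states n" by (auto simp: states_def fB_def)
  next
    fix a assume a: "a \<in> A"
    show "Xop a fB = fB" using fBx[OF a] by (simp add: Xop_def)
  next
    fix b assume b: "b \<in> B"
    show "Zop n b fB = fB"
    proof
      fix y
      show "Zop n b fB y = fB y"
        using b sgn[of "\<lambda>i. b i \<and> y i" b y]
        by (auto simp: Zop_def fB_def)
    qed
  qed
  have fBc: "fB c = 1" using cA Asub orth by (auto simp: fB_def bdot_comm[of n _ c])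
  have "\<kappa> * fB c = fB (\<lambda>_. False)"
    using ev[OF fB, of "\<lambda>_. False"] z0 by (simp add: bz)
  then have k1: "\<kappa> = 1" using fBc z0 by (simp add: fB_def)
  have dperp: "\<not> bdot n d y" if y: "y \<in> bvecs n" "\<forall>b\<in>B. \<not> bdot n b y" for y
  proof -
    have fy: "fB y = 1" using y by (simp add: fB_def)
    have "(-1) ^ card {i. i < n \<and> d i \<and> y i} * fB (bxor y c) = fB y"
      using ev[OF fB, of y] y(1) k1 by simp
    then have "(-1::complex) ^ card {i. i < n \<and> d i \<and> y i} = 1"
      using fy fBx[OF cA, of y] by simp
    then show ?thesis using sgn[of "\<lambda>i. d i \<and> y i" d y] by (auto split: if_splits)
  qed
  have "d \<in> B"
  proof (rule ccontr)
    assume "d \<notin> B"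
    from double_perp[OF B d this] dperp show False by blast
  qed
  with cA show ?thesis by simp
qed



lemma stab_lemma:
  assumes A: "f2_subspace n A" and B: "f2_subspace n B"
    and orth: "\<forall>a\<in>A. \<forall>b\<in>B. \<not> bdot n a b"
    and lg: "logical_op n A B (local_op n U)"
    and a: "a \<in> bvecs n"
    and Q: "\<forall>g\<in>codespace n A B. (\<lambda>x. (\<Prod>i<n. s i (x i)) * g (bxor x a)) = g"
    and g: "\<forall>i<n. \<forall>y x. U i y (x \<noteq> a i) * s i (x \<noteq> a i) = \<phi> i * (if d i \<and> y then -1 else 1) * U i (y \<noteq> c i) x"
  shows "(\<lambda>i. i < n \<and> c i) \<in> A \<and> (\<lambda>i. i < n \<and> d i) \<in> B"
proof -
  define W where "W = (\<lambda>f y. if y \<in> bvecs n then (\<Prod>i<n. \<phi> i) * (-1) ^ card {i. i < n \<and> d i \<and> y i}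
       * f (bxor y (\<lambda>i. i < n \<and> c i)) else (0::complex))"
  have conj: "local_op n U (\<lambda>x. (\<Prod>i<n. s i (x i)) * f (bxor x a)) = W (local_op n U f)" for f
    unfolding W_def by (rule local_op_conj[OF a g])
  have fx: "W f = f" if f: "f \<in> codespace n A B" for f
  proof -
    from f lg obtain h where h: "h \<in> codespace n A B" "f = local_op n U h"
      unfolding logical_op_def by (metis imageE)
    have "W f = local_op n U (\<lambda>x. (\<Prod>i<n. s i (x i)) * h (bxor x a))" using conj h(2) by simp
    also have "\<dots> = local_op n U h" using Q h(1) by simp
    finally show ?thesis using h(2) by simp
  qed
  have cs: "{i. i < n \<and> d i \<and> y i} = {i. i < n \<and> (i < n \<and> d i) \<and> y i}" for y by auto
  have "\<forall>f\<in>codespace n A B. (\<lambda>y. if y \<in> bvecs n then (\<Prod>i<n. \<phi> i) * (-1) ^ card {i. i < n \<and> (i < n \<and> d i) \<and> y i}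
       * f (bxor y (\<lambda>i. i < n \<and> c i)) else 0) = f"
    using fx unfolding W_def cs by blast
  from pauli_fix[OF A B orth _ _ this] show ?thesis by (auto simp: bvecs_def)
qed

definition rs :: "nat \<Rightarrow> (nat \<Rightarrow> gate) \<Rightarrow> gate set \<Rightarrow> (nat \<Rightarrow> bool) \<Rightarrow> (nat \<Rightarrow> bool)" where
  "rs n U K v = (\<lambda>i. i < n \<and> v i \<and> U i \<in> K)"

lemma stabX:
  assumes A: "f2_subspace n A" and B: "f2_subspace n B"
    and orth: "\<forall>a\<in>A. \<forall>b\<in>B. \<not> bdot n a b"
    and lg: "logical_op n A B (local_op n U)"
    and U: "\<forall>i<n. U i \<in> {gI, gP, gHP, gPH, gPHP, gH}"
    and a: "a \<in> A"
  shows "rs n U {gI,gP,gPHP,gHP} a \<in> A \<and> rs n U {gP,gH,gHP,gPH} a \<in> B"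
proof -
  have ab: "a \<in> bvecs n" using A a by (auto simp: f2_subspace_def)
  have "\<forall>i<n. \<exists>\<phi>. \<forall>y x. U i y (x \<noteq> a i) = \<phi> * (if (a i \<and> U i \<in> {gP,gH,gHP,gPH}) \<and> y then -1 else 1)
            * U i (y \<noteq> (a i \<and> U i \<in> {gI,gP,gPHP,gHP})) x"
    using U gateX by blast
  then obtain \<phi> where ph: "\<forall>i<n. \<forall>y x. U i y (x \<noteq> a i) = \<phi> i * (if (a i \<and> U i \<in> {gP,gH,gHP,gPH}) \<and> y then -1 else 1)
            * U i (y \<noteq> (a i \<and> U i \<in> {gI,gP,gPHP,gHP})) x"
    by metis
  have Q: "\<forall>g\<in>codespace n A B. (\<lambda>x. (\<Prod>i<n. (\<lambda>_ _. 1::complex) i (x i)) * g (bxor x a)) = g"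
    using a by (auto simp: codespace_def Xop_def)
  have g: "\<forall>i<n. \<forall>y x. U i y (x \<noteq> a i) * (\<lambda>_ _. 1::complex) i (x \<noteq> a i) = \<phi> i * (if (a i \<and> U i \<in> {gP,gH,gHP,gPH}) \<and> y then -1 else 1)
            * U i (y \<noteq> (a i \<and> U i \<in> {gI,gP,gPHP,gHP})) x"
    using ph by simp
  from stab_lemma[OF A B orth lg ab Q g]
  show ?thesis unfolding rs_def .
qed

lemma stabZ:
  assumes A: "f2_subspace n A" and B: "f2_subspace n B"
    and orth: "\<forall>a\<in>A. \<forall>b\<in>B. \<not> bdot n a b"
    and lg: "logical_op n A B (local_op n U)"
    and U: "\<forall>i<n. U i \<in> {gI, gP, gHP, gPH, gPHP, gH}"
    and b: "b \<in> B"
  shows "rs n U {gPHP,gH,gHP,gPH} b \<in> A \<and> rs n U {gI,gP,gPHP,gPH} b \<in> B"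
proof -
  have zb: "(\<lambda>_. False) \<in> bvecs n" by (simp add: bvecs_def)
  have "\<forall>i<n. \<exists>\<phi>. \<forall>y x. U i y x * (if b i \<and> x then -1 else 1) = \<phi> * (if (b i \<and> U i \<in> {gI,gP,gPHP,gPH}) \<and> y then -1 else 1)
            * U i (y \<noteq> (b i \<and> U i \<in> {gPHP,gH,gHP,gPH})) x"
    using U gateZ by blast
  then obtain \<phi> where ph: "\<forall>i<n. \<forall>y x. U i y x * (if b i \<and> x then -1 else 1) = \<phi> i * (if (b i \<and> U i \<in> {gI,gP,gPHP,gPH}) \<and> y then -1 else 1)
            * U i (y \<noteq> (b i \<and> U i \<in> {gPHP,gH,gHP,gPH})) x"
    by metis
  have Q: "\<forall>g\<in>codespace n A B. (\<lambda>x. (\<Prod>i<n. (\<lambda>i x. if b i \<and> x then -1 else 1::complex) i (x i)) * g (bxor x (\<lambda>_. False))) = g"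
  proof
    fix g assume "g \<in> codespace n A B"
    then have "Zop n b g = g" using b by (simp add: codespace_def)
    then show "(\<lambda>x. (\<Prod>i<n. (\<lambda>i x. if b i \<and> x then -1 else 1::complex) i (x i)) * g (bxor x (\<lambda>_. False))) = g"
      by (simp add: Zop_def prod_sign)
  qed
  have g: "\<forall>i<n. \<forall>y x. U i y (x \<noteq> (\<lambda>_. False) i) * (\<lambda>i x. if b i \<and> x then -1 else 1::complex) i (x \<noteq> (\<lambda>_. False) i) = \<phi> i * (if (b i \<and> U i \<in> {gI,gP,gPHP,gPH}) \<and> y then -1 else 1)
            * U i (y \<noteq> (b i \<and> U i \<in> {gPHP,gH,gHP,gPH})) x"
    using ph by simp
  from stab_lemma[OF A B orth lg zb Q g]
  show ?thesis unfolding rs_def .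
qed



lemma split_lemma:
  assumes A: "f2_subspace n A" and cl: "\<forall>a\<in>A. (\<lambda>i. a i \<and> i \<in> h) \<in> A"
  shows "subspace_splits n A h"
proof -
  have Asub: "A \<subseteq> bvecs n" and Az: "(\<lambda>_. False) \<in> A"
    and Acl: "\<And>a b. a \<in> A \<Longrightarrow> b \<in> A \<Longrightarrow> bxor a b \<in> A"
    using A unfolding f2_subspace_def by auto
  define A1 where "A1 = {a\<in>A. \<forall>i. a i \<longrightarrow> i \<in> h}"
  define A2 where "A2 = {a\<in>A. \<forall>i. a i \<longrightarrow> i \<notin> h}"
  have s1: "f2_subspace n A1" using Asub Az Acl by (auto simp: f2_subspace_def A1_def bxor_def)
  have s2: "f2_subspace n A2" using Asub Az Acl by (auto simp: f2_subspace_def A2_def bxor_def)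
  have p1: "\<forall>a\<in>A1. bsupp n a \<subseteq> h" by (auto simp: A1_def bsupp_def)
  have p2: "\<forall>a\<in>A2. bsupp n a \<subseteq> {0..<n} - h" by (auto simp: A2_def bsupp_def)
  have i12: "A1 \<inter> A2 = {\<lambda>_. False}" using Az by (auto simp: A1_def A2_def)
  have "A = {bxor a1 a2 | a1 a2. a1 \<in> A1 \<and> a2 \<in> A2}"
  proof (intro equalityI subsetI)
    fix a assume a: "a \<in> A"
    define a1 where "a1 = (\<lambda>i. a i \<and> i \<in> h)"
    have a1A: "a1 \<in> A" using cl a by (simp add: a1_def)
    have a2A: "bxor a a1 \<in> A" using Acl[OF a a1A] .
    have "a1 \<in> A1" using a1A by (simp add: A1_def a1_def)
    moreover have "bxor a a1 \<in> A2" using a2A by (auto simp: A2_def a1_def bxor_def)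
    moreover have "a = bxor a1 (bxor a a1)" by (auto simp: bxor_def fun_eq_iff)
    ultimately show "a \<in> {bxor a1 a2 | a1 a2. a1 \<in> A1 \<and> a2 \<in> A2}" by blast
  next
    fix a assume "a \<in> {bxor a1 a2 | a1 a2. a1 \<in> A1 \<and> a2 \<in> A2}"
    then show "a \<in> A" using Acl by (auto simp: A1_def A2_def)
  qed
  then show ?thesis unfolding subspace_splits_def using s1 s2 p1 p2 i12 by blast
qed

lemma rs_rs: "rs n U K (rs n U L v) = rs n U (K \<inter> L) v" by (auto simp: rs_def fun_eq_iff)

theorem proposition7:
  fixes n :: nat and A B :: "(nat \<Rightarrow> bool) set" and U :: "nat \<Rightarrow> gate"
  assumes "f2_subspace n A" and "f2_subspace n B"
    and "\<forall>a\<in>A. \<forall>b\<in>B. \<not> bdot n a b"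
    and "\<forall>i<n. U i \<in> {gI, gP, gHP, gPH, gPHP, gH}"
    and "logical_op n A B (local_op n U)"
  shows "\<forall>h \<in> {gate_set n U {gHP}, gate_set n U {gPH}, gate_set n U {gH}}.
           h \<noteq> {} \<and> h \<subset> {0..<n} \<longrightarrow> code_splits n A B h"
proof -
  note A = assms(1) and B = assms(2) and orth = assms(3) and U = assms(4) and lg = assms(5)
  have Acl: "\<And>a b. a \<in> A \<Longrightarrow> b \<in> A \<Longrightarrow> bxor a b \<in> A"
    using A unfolding f2_subspace_def by auto
  have Bcl: "\<And>a b. a \<in> B \<Longrightarrow> b \<in> B \<Longrightarrow> bxor a b \<in> B"
    using B unfolding f2_subspace_def by auto
  note X1 = stabX[OF A B orth lg U, THEN conjunct1]
  note X2 = stabX[OF A B orth lg U, THEN conjunct2]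
  note Z1 = stabZ[OF A B orth lg U, THEN conjunct1]
  note Z2 = stabZ[OF A B orth lg U, THEN conjunct2]
  have eq1: "\<And>v. rs n U ({gPHP,gH,gHP,gPH} \<inter> {gP,gH,gHP,gPH}) v = rs n U {gH,gHP,gPH} v"
    by (rule ext) (use U in \<open>auto simp: rs_def gates_distinct bxor_def\<close>)
  have eq2: "\<And>v. rs n U ({gI,gP,gPHP,gPH} \<inter> {gP,gH,gHP,gPH}) v = rs n U {gP,gPH} v"
    by (rule ext) (use U in \<open>auto simp: rs_def gates_distinct bxor_def\<close>)
  have eq3: "\<And>v. rs n U ({gPHP,gH,gHP,gPH} \<inter> {gP,gPH}) v = rs n U {gPH} v"
    by (rule ext) (use U in \<open>auto simp: rs_def gates_distinct bxor_def\<close>)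
  have eq4: "\<And>v. rs n U ({gI,gP,gPHP,gHP} \<inter> {gH,gHP,gPH}) v = rs n U {gHP} v"
    by (rule ext) (use U in \<open>auto simp: rs_def gates_distinct bxor_def\<close>)
  have eq5: "\<And>v. rs n U ({gP,gH,gHP,gPH} \<inter> {gPHP,gH,gHP,gPH}) v = rs n U {gH,gHP,gPH} v"
    by (rule ext) (use U in \<open>auto simp: rs_def gates_distinct bxor_def\<close>)
  have eq6: "\<And>v. rs n U ({gI,gP,gPHP,gHP} \<inter> {gPHP,gH,gHP,gPH}) v = rs n U {gPHP,gHP} v"
    by (rule ext) (use U in \<open>auto simp: rs_def gates_distinct bxor_def\<close>)
  have eq7: "\<And>v. rs n U ({gP,gH,gHP,gPH} \<inter> {gPHP,gHP}) v = rs n U {gHP} v"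
    by (rule ext) (use U in \<open>auto simp: rs_def gates_distinct bxor_def\<close>)
  have eq8: "\<And>v. rs n U ({gI,gP,gPHP,gPH} \<inter> {gH,gHP,gPH}) v = rs n U {gPH} v"
    by (rule ext) (use U in \<open>auto simp: rs_def gates_distinct bxor_def\<close>)
  have eq9: "\<And>v. rs n U {gH} v = bxor (rs n U {gH,gHP,gPH} v) (bxor (rs n U {gHP} v) (rs n U {gPH} v))"
    by (rule ext) (use U in \<open>auto simp: rs_def gates_distinct bxor_def\<close>)
  note eqs = eq1 eq2 eq3 eq4 eq5 eq6 eq7 eq8 eq9
  have gs: "\<And>g v. (\<lambda>i. v i \<and> i \<in> gate_set n U {g}) = rs n U {g} v"
    by (rule ext) (auto simp: rs_def gate_set_def)
  have Aall: "rs n U {gHP} a \<in> A \<and> rs n U {gPH} a \<in> A \<and> rs n U {gH} a \<in> A" if a: "a \<in> A" for a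
  proof -
    have v2: "rs n U {gH,gHP,gPH} a \<in> A" using Z1[OF X2[OF a]] by (simp only: rs_rs eqs)
    have v3: "rs n U {gP,gPH} a \<in> B" using Z2[OF X2[OF a]] by (simp only: rs_rs eqs)
    have v4: "rs n U {gPH} a \<in> A" using Z1[OF v3] by (simp only: rs_rs eqs)
    have v5: "rs n U {gHP} a \<in> A" using X1[OF v2] by (simp only: rs_rs eqs)
    show ?thesis using v2 v4 v5 Acl eq9[of a] by metis
  qed
  have Ball: "rs n U {gHP} b \<in> B \<and> rs n U {gPH} b \<in> B \<and> rs n U {gH} b \<in> B" if b: "b \<in> B" for b
  proof -
    have w2: "rs n U {gH,gHP,gPH} b \<in> B" using X2[OF Z1[OF b]] by (simp only: rs_rs eqs)
    have w3: "rs n U {gPHP,gHP} b \<in> A" using X1[OF Z1[OF b]] by (simp only: rs_rs eqs)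
    have w4: "rs n U {gHP} b \<in> B" using X2[OF w3] by (simp only: rs_rs eqs)
    have w6: "rs n U {gPH} b \<in> B" using Z2[OF w2] by (simp only: rs_rs eqs)
    show ?thesis using w2 w4 w6 Bcl eq9[of b] by metis
  qed
  have "code_splits n A B (gate_set n U {g})" if "g \<in> {gHP, gPH, gH}" for g
    unfolding code_splits_def
  proof
    show "subspace_splits n A (gate_set n U {g})"
      by (rule split_lemma[OF A]) (use that Aall in \<open>auto simp: gs\<close>)
    show "subspace_splits n B (gate_set n U {g})"
      by (rule split_lemma[OF B]) (use that Ball in \<open>auto simp: gs\<close>)
  qed
  then show ?thesis by auto
qed


end
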